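(* For every solution $c$ of the fragmentation equation with initial condition $c_0\in D(m)$ (no condition on $h$ beyond those in the context), $$\lim_{t\to\infty}\int_{x_0}^\infty c(t,x)\,x\,dx=0\quad\text{for all }x_0>0.$$
   Context: Fix $\alpha>0$ and a Borel function $h\colon(0,1)\to[0,\infty)$ with $\int_0^1 h(r)r\,dr=1$. $m(dx)=x\,dx$ on $(0,\infty)$, $D(m)$ the set of nonnegative $f$ with $\int_0^\infty f(x)x\,dx=1$. The fragmentation equation is $\partial_t c(t,x)=\int_x^\infty \frac1y h(x/y)y^\alpha c(t,y)dy-x^\alpha c(t,x)$, $c(0,\cdot)=c_0$; the solution for $c_0\in D(m)$ is the mass-conserving one, i.e. $c(t,\cdot)$ is the density w.r.t. $m$ of the pure jump Markov process $Y(t)$ that in state $x$ waits an exponential time with mean $x^{-\alpha}$ and then jumps to $\theta x$ with $\theta$ independent with $P(\theta\le r)=\int_0^rh(z)z\,dz$, where $Y(0)$ has density $c_0$ w.r.t. $m$. *)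

theory Defs
  imports "HOL-Probability.Probability"
begin

text \<open>Explicit (jump-chain) construction of the pure jump Markov process Y.
  Y0 is the initial state, E k are i.i.d. standard exponential clocks, Theta k are the
  i.i.d. fragmentation ratios. The embedded chain is X k = Y0 * Theta 0 * ... * Theta (k-1);
  the holding time in state X k is E k / (X k) powr alpha (exponential with mean (X k) powr (-alpha));
  T n is the n-th jump time.\<close>

definition frag_X :: "('a \<Rightarrow> real) \<Rightarrow> (nat \<Rightarrow> 'a \<Rightarrow> real) \<Rightarrow> nat \<Rightarrow> 'a \<Rightarrow> real" where
  "frag_X Y0 Theta k \<omega> = Y0 \<omega> * (\<Prod>j<k. Theta j \<omega>)"

definition frag_T :: "real \<Rightarrow> ('a \<Rightarrow> real) \<Rightarrow> (nat \<Rightarrow> 'a \<Rightarrow> real) \<Rightarrow> (nat \<Rightarrow> 'a \<Rightarrow> real)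
    \<Rightarrow> nat \<Rightarrow> 'a \<Rightarrow> real" where
  "frag_T \<alpha> Y0 E Theta n \<omega> = (\<Sum>k<n. E k \<omega> / (frag_X Y0 Theta k \<omega>) powr \<alpha>)"

text \<open>Value of the process at time t (set to 0 off the almost-sure event where it is defined).\<close>
definition frag_Y :: "real \<Rightarrow> ('a \<Rightarrow> real) \<Rightarrow> (nat \<Rightarrow> 'a \<Rightarrow> real) \<Rightarrow> (nat \<Rightarrow> 'a \<Rightarrow> real)
    \<Rightarrow> real \<Rightarrow> 'a \<Rightarrow> real" where
  "frag_Y \<alpha> Y0 E Theta t \<omega> =
     (if 0 \<le> t \<and> (\<exists>n. t < frag_T \<alpha> Y0 E Theta (Suc n) \<omega>)
      then frag_X Y0 Theta (LEAST n. t < frag_T \<alpha> Y0 E Theta (Suc n) \<omega>) \<omega>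
      else 0)"

definition frag_family :: "('a \<Rightarrow> real) \<Rightarrow> (nat \<Rightarrow> 'a \<Rightarrow> real) \<Rightarrow> (nat \<Rightarrow> 'a \<Rightarrow> real)
    \<Rightarrow> unit + (nat + nat) \<Rightarrow> 'a \<Rightarrow> real" where
  "frag_family Y0 E Theta i = (case i of Inl _ \<Rightarrow> Y0 | Inr (Inl k) \<Rightarrow> E k | Inr (Inr k) \<Rightarrow> Theta k)"

end

theory Submission imports Defs begin

lemma (in prob_space) tail_tendsto:
  fixes X :: "'a \<Rightarrow> real"
  assumes X[measurable]: "X \<in> borel_measurable M"
  shows "((\<lambda>t. prob {\<omega>\<in>space M. t < X \<omega>}) \<longlongrightarrow> 0) at_top"
proof -
  interpret D: real_distribution "distr M borel X" using X by simp
  have eq: "prob {\<omega>\<in>space M. t < X \<omega>} = 1 - cdf (distr M borel X) t" for t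
  proof -
    have "cdf (distr M borel X) t = prob (X -` {..t} \<inter> space M)"
      unfolding cdf_def by (simp add: measure_distr)
    moreover have "{\<omega>\<in>space M. t < X \<omega>} = space M - (X -` {..t} \<inter> space M)" by auto
    moreover have "X -` {..t} \<inter> space M \<in> events" by measurable
    ultimately show ?thesis by (simp add: prob_compl)
  qed
  have "((\<lambda>t. 1 - cdf (distr M borel X) t) \<longlongrightarrow> 1 - 1) at_top"
    by (intro tendsto_intros D.cdf_lim_at_top_prob)
  then show ?thesis by (simp add: eq)
qed

lemma sandwich0:
  fixes f :: "'a \<Rightarrow> real" and a :: "'k \<Rightarrow> real" and b :: "'k \<Rightarrow> 'a \<Rightarrow> real"
  assumes G: "G \<noteq> bot" and nn: "\<And>x. 0 \<le> f x"
    and bd: "\<forall>\<^sub>F k in G. \<forall>x. f x \<le> a k + b k x"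
    and a: "(a \<longlongrightarrow> 0) G" and b: "\<And>k. (b k \<longlongrightarrow> 0) F"
  shows "(f \<longlongrightarrow> 0) F"
proof (rule tendstoI)
  fix e :: real assume e: "0 < e"
  have "\<forall>\<^sub>F k in G. (\<forall>x. f x \<le> a k + b k x) \<and> dist (a k) 0 < e/2"
    using bd tendstoD[OF a, of "e/2"] e by (auto intro: eventually_conj)
  then obtain k where k: "\<forall>x. f x \<le> a k + b k x" "dist (a k) 0 < e/2"
    using G by (auto dest: eventually_happens)
  have "\<forall>\<^sub>F x in F. dist (b k x) 0 < e/2" using tendstoD[OF b, of "e/2"] e by auto
  then show "\<forall>\<^sub>F x in F. dist (f x) 0 < e"
  proof (rule eventually_mono)
    fix x assume "dist (b k x) 0 < e/2"
    with k nn[of x] show "dist (f x) 0 < e" by (auto simp: dist_real_def) (smt (verit) k(1))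
  qed
qed

lemma frag_X_decr:
  assumes "0 \<le> Y0 \<omega>" "\<forall>j. 0 \<le> Theta j \<omega> \<and> Theta j \<omega> \<le> 1" "m \<le> n"
  shows "frag_X Y0 Theta n \<omega> \<le> frag_X Y0 Theta m \<omega> \<and> 0 \<le> frag_X Y0 Theta n \<omega>"
  using assms(3)
proof (induction n rule: dec_induct)
  case base
  then show ?case using assms by (auto simp: frag_X_def intro!: prod_nonneg mult_nonneg_nonneg)
next
  case (step n)
  have "frag_X Y0 Theta (Suc n) \<omega> = frag_X Y0 Theta n \<omega> * Theta n \<omega>"
    by (simp add: frag_X_def)
  then show ?case using step assms(2)[rule_format, of n]
    by (smt (verit) mult_left_le mult_nonneg_nonneg)
qed

lemma frag_Y_incl:
  assumes Y0: "0 \<le> Y0 \<omega>" and Th: "\<forall>j. 0 \<le> Theta j \<omega> \<and> Theta j \<omega> \<le> 1"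
    and E: "\<forall>k. 0 \<le> E k \<omega>" and x0: "0 < x0"
    and Y: "x0 \<le> frag_Y \<alpha> Y0 E Theta t \<omega>"
  shows "x0 \<le> frag_X Y0 Theta N \<omega> \<or> t < frag_T \<alpha> Y0 E Theta N \<omega>"
proof -
  let ?P = "\<lambda>n. t < frag_T \<alpha> Y0 E Theta (Suc n) \<omega>"
  have ex: "\<exists>n. ?P n" and Yeq: "frag_Y \<alpha> Y0 E Theta t \<omega> = frag_X Y0 Theta (LEAST n. ?P n) \<omega>"
    using Y x0 by (auto simp: frag_Y_def split: if_splits)
  define n where "n = (LEAST n. ?P n)"
  have Pn: "?P n" unfolding n_def using ex by (rule LeastI_ex)
  have Xn: "x0 \<le> frag_X Y0 Theta n \<omega>" using Y Yeq n_def by simp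
  show ?thesis
  proof (cases "N \<le> n")
    case True
    then show ?thesis using frag_X_decr[of Y0 \<omega> Theta, OF Y0 Th True] Xn by auto
  next
    case False
    have "frag_T \<alpha> Y0 E Theta (Suc n) \<omega> \<le> frag_T \<alpha> Y0 E Theta N \<omega>"
      unfolding frag_T_def
      by (rule sum_mono2) (use False E in auto)
    then show ?thesis using Pn by auto
  qed
qed

theorem mainTheorem9:
  fixes \<alpha> :: real and h :: "real \<Rightarrow> real" and c0 :: "real \<Rightarrow> real"
    and M :: "'a measure" and Y0 :: "'a \<Rightarrow> real"
    and E :: "nat \<Rightarrow> 'a \<Rightarrow> real" and Theta :: "nat \<Rightarrow> 'a \<Rightarrow> real"
    and c :: "real \<Rightarrow> real \<Rightarrow> real" and x0 :: real
  assumes alpha_pos: "0 < \<alpha>"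
    and h_meas: "h \<in> borel_measurable borel"
    and h_nonneg: "\<forall>r\<in>{0<..<1}. 0 \<le> h r"
    and h_norm: "(\<integral>\<^sup>+ r. ennreal (indicator {0<..<1} r * h r * r) \<partial>lborel) = 1"
    and c0_meas: "c0 \<in> borel_measurable borel"
    and c0_nonneg: "\<forall>x>0. 0 \<le> c0 x"
    and c0_mass: "(\<integral>\<^sup>+ x. ennreal (indicator {0<..} x * c0 x * x) \<partial>lborel) = 1"
    and M_prob: "prob_space M"
    and indep: "prob_space.indep_vars M (\<lambda>_. borel) (frag_family Y0 E Theta) UNIV"
    and Y0_distr: "distributed M lborel Y0 (\<lambda>x. ennreal (indicator {0<..} x * c0 x * x))"
    and E_distr: "\<And>k. distributed M lborel (E k) (exponential_density 1)"
    and Theta_distr: "\<And>k. distributed M lborel (Theta k) (\<lambda>z. ennreal (indicator {0<..<1} z * h z * z))"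
    and c_nonneg: "\<forall>t\<ge>0. \<forall>x>0. 0 \<le> c t x"
    and c_density: "\<forall>t\<ge>0. distributed M lborel (frag_Y \<alpha> Y0 E Theta t)
                        (\<lambda>x. ennreal (indicator {0<..} x * c t x * x))"
    and x0_pos: "0 < x0"
  shows "((\<lambda>t. LBINT x:{x0..}. c t x * x) \<longlongrightarrow> 0) at_top"
proof -
  interpret prob_space M by (rule M_prob)
  let ?X = "frag_X Y0 Theta" and ?T = "frag_T \<alpha> Y0 E Theta" and ?Y = "frag_Y \<alpha> Y0 E Theta"
  have Y0m[measurable]: "Y0 \<in> borel_measurable M" using Y0_distr by (simp add: distributed_def)
  have Thm[measurable]: "Theta j \<in> borel_measurable M" for j using Theta_distr[of j] by (simp add: distributed_def)
  have Em[measurable]: "E k \<in> borel_measurable M" for k using E_distr[of k] by (simp add: distributed_def)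
  have Xm[measurable]: "?X N \<in> borel_measurable M" for N unfolding frag_X_def by measurable
  have Tm[measurable]: "?T N \<in> borel_measurable M" for N unfolding frag_T_def by measurable
  have AEY0: "AE \<omega> in M. 0 < Y0 \<omega>"
    using distributed_AE2[OF Y0_distr, of "\<lambda>x. 0 < x"] by (auto split: split_indicator)
  have "AE \<omega> in M. 0 < Theta j \<omega> \<and> Theta j \<omega> < 1" for j
    using distributed_AE2[OF Theta_distr[of j], of "\<lambda>x. 0 < x \<and> x < 1"] by (auto split: split_indicator)
  then have AETh: "AE \<omega> in M. \<forall>j. 0 < Theta j \<omega> \<and> Theta j \<omega> < 1"
    by (simp add: AE_all_countable)
  have "AE \<omega> in M. 0 \<le> E k \<omega>" for k
    using distributed_AE2[OF E_distr[of k], of "\<lambda>x. 0 \<le> x"] by (auto simp: exponential_density_def)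
  then have AEE: "AE \<omega> in M. \<forall>k. 0 \<le> E k \<omega>"
    by (simp add: AE_all_countable)
  have bound1: "prob {\<omega>\<in>space M. x0 \<le> ?Y t \<omega>}
      \<le> prob {\<omega>\<in>space M. x0 \<le> ?X N \<omega>} + prob {\<omega>\<in>space M. t < ?T N \<omega>}" for N t
  proof -
    have "prob {\<omega>\<in>space M. x0 \<le> ?Y t \<omega>}
        \<le> prob ({\<omega>\<in>space M. x0 \<le> ?X N \<omega>} \<union> {\<omega>\<in>space M. t < ?T N \<omega>})"
    proof (rule finite_measure_mono_AE)
      show "AE \<omega> in M. \<omega> \<in> {\<omega>\<in>space M. x0 \<le> ?Y t \<omega>} \<longrightarrow>
          \<omega> \<in> {\<omega>\<in>space M. x0 \<le> ?X N \<omega>} \<union> {\<omega>\<in>space M. t < ?T N \<omega>}"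
        using AEY0 AETh AEE
      proof eventually_elim
        case (elim \<omega>)
        then show ?case using frag_Y_incl[of Y0 \<omega> Theta E x0 \<alpha> t N] x0_pos
          by (auto simp: less_imp_le)
      qed
    qed measurable
    also have "\<dots> \<le> prob {\<omega>\<in>space M. x0 \<le> ?X N \<omega>} + prob {\<omega>\<in>space M. t < ?T N \<omega>}"
      by (rule measure_Un_le) measurable
    finally show ?thesis .
  qed
  define \<mu> where "\<mu> = expectation (Theta 0)"
  have Thint: "integrable M (Theta j)" for j
    by (rule integrable_const_bound[where B=1]) (use AETh in \<open>auto elim!: eventually_mono simp: abs_le_iff dest!: spec[of _ j]\<close>)
  have mu_eq: "expectation (Theta j) = \<mu>" for j
  proof -
    have "expectation (Theta j) = integral\<^sup>L (distr M lborel (Theta j)) (\<lambda>x. x)" for j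
      by (subst integral_distr) auto
    then show ?thesis unfolding \<mu>_def
      using Theta_distr[of j] Theta_distr[of 0] by (simp add: distributed_def)
  qed
  have mu_nonneg: "0 \<le> \<mu>" unfolding \<mu>_def
    by (rule integral_nonneg_AE) (use AETh in \<open>auto elim!: eventually_mono dest!: spec[of _ 0]\<close>)
  have mu_lt: "\<mu> < 1"
  proof (rule ccontr)
    assume "\<not> \<mu> < 1"
    moreover have "\<mu> \<le> 1"
    proof -
      have "expectation (Theta 0) \<le> expectation (\<lambda>_. 1::real)"
        by (rule integral_mono_AE[OF Thint[of 0]]) (use AETh in \<open>auto elim!: eventually_mono dest!: spec[of _ 0]\<close>)
      then show ?thesis by (simp add: \<mu>_def prob_space)
    qed
    ultimately have "\<mu> = 1" by simp
    then have "expectation (\<lambda>\<omega>. 1 - Theta 0 \<omega>) = 0"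
      using Thint[of 0] by (simp add: \<mu>_def prob_space)
    then have "AE \<omega> in M. 1 - Theta 0 \<omega> = 0"
      by (subst (asm) integral_nonneg_eq_0_iff_AE)
         (use Thint[of 0] AETh in \<open>auto elim!: eventually_mono dest!: spec[of _ 0]\<close>)
    with AETh have "AE \<omega> in M. False" by eventually_elim (auto dest!: spec[of _ 0])
    then show False by (simp add: AE_False)
  qed
  have prod_mean: "expectation (\<lambda>\<omega>. \<Prod>j<N. Theta j \<omega>) = \<mu> ^ N"
    and prod_int: "integrable M (\<lambda>\<omega>. \<Prod>j<N. Theta j \<omega>)" for N
  proof -
    let ?I = "(\<lambda>j. Inr (Inr j)) ` {..<N} :: (unit + (nat + nat)) set"
    have ind: "indep_vars (\<lambda>_. borel) (frag_family Y0 E Theta) ?I"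
      by (rule indep_vars_subset[OF indep]) auto
    have int: "\<And>i. i \<in> ?I \<Longrightarrow> integrable M (frag_family Y0 E Theta i)"
      using Thint by (auto simp: frag_family_def)
    have inj: "inj_on (\<lambda>j. Inr (Inr j) :: unit + (nat + nat)) {..<N}" by (auto simp: inj_on_def)
    have re: "(\<Prod>i\<in>?I. frag_family Y0 E Theta i \<omega>) = (\<Prod>j<N. Theta j \<omega>)" for \<omega>
      by (simp add: prod.reindex[OF inj] frag_family_def)
    have re2: "(\<Prod>i\<in>?I. expectation (frag_family Y0 E Theta i)) = \<mu> ^ N"
      by (simp add: prod.reindex[OF inj] frag_family_def mu_eq)
    show "expectation (\<lambda>\<omega>. \<Prod>j<N. Theta j \<omega>) = \<mu> ^ N"
      using indep_vars_lebesgue_integral[OF _ ind int] re re2 by simp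
    show "integrable M (\<lambda>\<omega>. \<Prod>j<N. Theta j \<omega>)"
      using indep_vars_integrable[OF _ ind int] re by simp
  qed
  have AEZ: "AE \<omega> in M. 0 \<le> (\<Prod>j<N. Theta j \<omega>)" for N
    using AETh by eventually_elim (simp add: prod_nonneg less_imp_le)
  have markov: "prob {\<omega>\<in>space M. a \<le> (\<Prod>j<N. Theta j \<omega>)} \<le> \<mu> ^ N / a" if "0 < a" for a N
    using integral_Markov_inequality_measure[OF prod_int[of N] sets.top AEZ[of N] that] prod_mean[of N]
    by simp
  have bound2: "prob {\<omega>\<in>space M. x0 \<le> ?X N \<omega>} \<le> prob {\<omega>\<in>space M. K < Y0 \<omega>} + \<mu> ^ N / (x0 / K)"
    if K: "0 < K" for K N
  proof -
    have "prob {\<omega>\<in>space M. x0 \<le> ?X N \<omega>}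
        \<le> prob ({\<omega>\<in>space M. K < Y0 \<omega>} \<union> {\<omega>\<in>space M. x0 / K \<le> (\<Prod>j<N. Theta j \<omega>)})"
    proof (rule finite_measure_mono_AE)
      show "AE \<omega> in M. \<omega> \<in> {\<omega>\<in>space M. x0 \<le> ?X N \<omega>} \<longrightarrow>
          \<omega> \<in> {\<omega>\<in>space M. K < Y0 \<omega>} \<union> {\<omega>\<in>space M. x0 / K \<le> (\<Prod>j<N. Theta j \<omega>)}"
        using AEZ[of N]
      proof eventually_elim
        case (elim \<omega>)
        show ?case
        proof (intro impI)
          assume a: "\<omega> \<in> {\<omega>\<in>space M. x0 \<le> ?X N \<omega>}"
          show "\<omega> \<in> {\<omega>\<in>space M. K < Y0 \<omega>} \<union> {\<omega>\<in>space M. x0 / K \<le> (\<Prod>j<N. Theta j \<omega>)}"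
          proof (cases "K < Y0 \<omega>")
            case False
            then have "Y0 \<omega> * (\<Prod>j<N. Theta j \<omega>) \<le> K * (\<Prod>j<N. Theta j \<omega>)"
              using elim by (intro mult_right_mono) auto
            then have "x0 \<le> K * (\<Prod>j<N. Theta j \<omega>)" using a by (auto simp: frag_X_def)
            then have "x0 / K \<le> (\<Prod>j<N. Theta j \<omega>)" using K by (simp add: divide_le_eq mult.commute)
            then show ?thesis using a by auto
          qed (use a in auto)
        qed
      qed
    qed measurable
    also have "\<dots> \<le> prob {\<omega>\<in>space M. K < Y0 \<omega>} + prob {\<omega>\<in>space M. x0 / K \<le> (\<Prod>j<N. Theta j \<omega>)}"
      by (rule measure_Un_le) measurable
    also have "\<dots> \<le> prob {\<omega>\<in>space M. K < Y0 \<omega>} + \<mu> ^ N / (x0 / K)"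
      using markov[of "x0 / K" N] K x0_pos by simp
    finally show ?thesis .
  qed
  have Xlim: "(\<lambda>N. prob {\<omega>\<in>space M. x0 \<le> ?X N \<omega>}) \<longlonglongrightarrow> 0"
  proof (rule sandwich0[where G=at_top and a="\<lambda>K. prob {\<omega>\<in>space M. K < Y0 \<omega>}"
        and b="\<lambda>K N. \<mu> ^ N / (x0 / K)"])
    show "\<forall>\<^sub>F K in at_top. \<forall>N. prob {\<omega>\<in>space M. x0 \<le> ?X N \<omega>}
        \<le> prob {\<omega>\<in>space M. K < Y0 \<omega>} + \<mu> ^ N / (x0 / K)"
      using eventually_gt_at_top[of "0::real"] by eventually_elim (use bound2 in auto)
    show "((\<lambda>K. prob {\<omega>\<in>space M. K < Y0 \<omega>}) \<longlongrightarrow> 0) at_top"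
      by (rule tail_tendsto) measurable
    show "((\<lambda>N. \<mu> ^ N / (x0 / K)) \<longlongrightarrow> 0) sequentially" for K
      by (intro tendsto_divide_zero LIMSEQ_power_zero) (use mu_nonneg mu_lt in auto)
  qed auto
  have Plim: "((\<lambda>t. prob {\<omega>\<in>space M. x0 \<le> ?Y t \<omega>}) \<longlongrightarrow> 0) at_top"
  proof (rule sandwich0[where G=sequentially and a="\<lambda>N. prob {\<omega>\<in>space M. x0 \<le> ?X N \<omega>}"
        and b="\<lambda>N t. prob {\<omega>\<in>space M. t < ?T N \<omega>}"])
    show "((\<lambda>t. prob {\<omega>\<in>space M. t < ?T N \<omega>}) \<longlongrightarrow> 0) at_top" for N
      by (rule tail_tendsto) measurable
  qed (use Xlim bound1 in auto)
  have eq: "(LBINT x:{x0..}. c t x * x) = prob {\<omega>\<in>space M. x0 \<le> ?Y t \<omega>}" if t: "0 \<le> t" for t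
  proof -
    define f where "f x = ennreal (indicator {0<..} x * c t x * x)" for x
    have D: "distributed M lborel (?Y t) f" using c_density t unfolding f_def by auto
    have fm[measurable]: "f \<in> borel_measurable borel" using D by (simp add: distributed_def)
    have Ym[measurable]: "?Y t \<in> borel_measurable M" using D by (simp add: distributed_def)
    have g: "indicator {x0..} x * (c t x * x) = indicator {x0..} x * enn2real (f x)" for x
      using c_nonneg t x0_pos by (auto simp: f_def split: split_indicator)
    have "(LBINT x:{x0..}. c t x * x) = integral\<^sup>L lborel (\<lambda>x. indicator {x0..} x * enn2real (f x))"
      by (simp add: set_lebesgue_integral_def g)
    also have "\<dots> = enn2real (\<integral>\<^sup>+ x. ennreal (indicator {x0..} x * enn2real (f x)) \<partial>lborel)"
      by (rule integral_eq_nn_integral) auto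
    also have "(\<integral>\<^sup>+ x. ennreal (indicator {x0..} x * enn2real (f x)) \<partial>lborel)
        = (\<integral>\<^sup>+ x. f x * indicator {x0..} x \<partial>lborel)"
      by (intro nn_integral_cong) (auto simp: f_def split: split_indicator)
    also have "\<dots> = emeasure (density lborel f) {x0..}"
      by (rule emeasure_density[symmetric]) auto
    also have "\<dots> = emeasure (distr M lborel (?Y t)) {x0..}"
      using D by (simp add: distributed_def)
    also have "\<dots> = emeasure M (?Y t -` {x0..} \<inter> space M)"
      by (rule emeasure_distr) auto
    also have "?Y t -` {x0..} \<inter> space M = {\<omega>\<in>space M. x0 \<le> ?Y t \<omega>}" by auto
    finally show ?thesis by (simp add: measure_def)
  qed
  show ?thesis
    by (rule Lim_transform_eventually[OF Plim])
       (use eventually_ge_at_top[of "0::real"] in \<open>eventually_elim, use eq in force\<close>)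
qed

end
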